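(* Let $X=(X_n)_{n\in\mathbb{Z}}$ be $L_2$-NED with constants $\nu(k)$ on a stationary process $(Z_n)_{n\in\mathbb{Z}}$, and let $r\ge1$ be an integer. If for some $p,q\in(1,\infty)$ with $1/p+1/q=1$ we have $\mathbb{E}[|X_n|^{p(2r-1)}]<\infty$ and $X$ is $L_q$-NED on $(Z_n)$ with constants of order $O(\nu(k))$, then $(|X_n|^r)_{n\in\mathbb{Z}}$ is $L_2$-NED on $(Z_n)$ with constants of order $O(\nu(k)^{1/2})$.
   Context: $\mathcal{F}_{Z,s,t}=\sigma(Z_u:s\le u\le t)$. A stationary process $(Y_n)$ is $L_q$-NED on $(Z_n)$ with constants $\nu(k)$ if $\|Y_0-\mathbb{E}[Y_0\mid\mathcal{F}_{Z,-k,k}]\|_q\le\nu(k)$ for $k\ge0$, with $\nu(k)\to0$, where $\|\cdot\|_q=\mathbb{E}^{1/q}|\cdot|^q$. *)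

theory Defs
  imports "HOL-Probability.Probability" "HOL-Library.Landau_Symbols"
begin

definition stationary_process ::
  "'a measure \<Rightarrow> 'b measure \<Rightarrow> (int \<Rightarrow> 'a \<Rightarrow> 'b) \<Rightarrow> bool" where
  "stationary_process M N Z \<longleftrightarrow>
     (\<forall>n. Z n \<in> measurable M N) \<and>
     distr M (PiM UNIV (\<lambda>_. N)) (\<lambda>\<omega> n. Z (n + 1) \<omega>)
       = distr M (PiM UNIV (\<lambda>_. N)) (\<lambda>\<omega> n. Z n \<omega>)"

definition gen_sigma ::
  "'a measure \<Rightarrow> 'b measure \<Rightarrow> (int \<Rightarrow> 'a \<Rightarrow> 'b) \<Rightarrow> int \<Rightarrow> int \<Rightarrow> 'a measure" where
  "gen_sigma M N Z s t =
     sigma (space M) (\<Union>u\<in>{s..t}. {Z u -` A \<inter> space M | A. A \<in> sets N})"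

definition Lq_norm :: "'a measure \<Rightarrow> real \<Rightarrow> ('a \<Rightarrow> real) \<Rightarrow> ennreal" where
  "Lq_norm M q f =
     (let I = (\<integral>\<^sup>+ \<omega>. ennreal (\<bar>f \<omega>\<bar> powr q) \<partial>M)
      in if I = \<infinity> then \<infinity> else ennreal (enn2real I powr (1 / q)))"

text \<open>Y is L_q-NED on Z with constants nu: Y is a stationary real process (with
  integrable Y_0, so that the conditional expectation is meaningful), and
  ||Y_0 - E[Y_0 | F_{Z,-k,k}]||_q <= nu k for all k, with nu k -> 0.\<close>
definition NED ::
  "'a measure \<Rightarrow> real \<Rightarrow> 'b measure \<Rightarrow> (int \<Rightarrow> 'a \<Rightarrow> 'b) \<Rightarrow> (int \<Rightarrow> 'a \<Rightarrow> real)
     \<Rightarrow> (nat \<Rightarrow> real) \<Rightarrow> bool" where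
  "NED M q N Z Y \<nu> \<longleftrightarrow>
     stationary_process M borel Y \<and> integrable M (Y 0) \<and>
     (\<forall>k::nat. Lq_norm M q
        (\<lambda>\<omega>. Y 0 \<omega> - real_cond_exp M (gen_sigma M N Z (- int k) (int k)) (Y 0) \<omega>)
        \<le> ennreal (\<nu> k)) \<and>
     \<nu> \<longlonglongrightarrow> 0"

end

theory Submission
  imports Defs
begin

lemma convex_abs_powr:
  fixes s :: real assumes s: "s \<ge> 1"
  shows "convex_on UNIV (\<lambda>x::real. \<bar>x\<bar> powr s)"
proof (rule convex_onI)
  fix t x y :: real assume t: "0 < t" "t < 1"
  have pos: "((1 - t) * a + t * b) powr s \<le> (1 - t) * a powr s + t * b powr s"
    if ab: "a \<ge> 0" "b \<ge> 0" for a b :: real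
  proof (cases "a = 0 \<or> b = 0")
    case True
    then show ?thesis
    proof
      assume a0: "a = 0"
      have "(t * b) powr s = t powr s * b powr s" using t ab by (simp add: powr_mult)
      also have "\<dots> \<le> t * b powr s"
        using t s by (intro mult_right_mono) (auto intro: powr_le_one_le ge_one_powr_ge_zero
            simp: powr_mono2' order.trans[OF powr_mono[of 1 s t]])
      finally show ?thesis using a0 by simp
    next
      assume b0: "b = 0"
      have "((1-t) * a) powr s = (1-t) powr s * a powr s" using t ab by (simp add: powr_mult)
      also have "\<dots> \<le> (1-t) * a powr s"
        using t s by (intro mult_right_mono) (auto simp: powr_le_one_le order.trans[OF powr_mono[of 1 s "1-t"]])
      finally show ?thesis using b0 by simp
    qed
  next
    case False
    then have "a > 0" "b > 0" using ab by auto
    then show ?thesis using convex_onD[OF powr_convex[OF s], of t a b] t by simp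
  qed
  have "\<bar>(1 - t) *\<^sub>R x + t *\<^sub>R y\<bar> \<le> (1 - t) * \<bar>x\<bar> + t * \<bar>y\<bar>"
    using t by (simp add: abs_triangle_ineq[THEN order.trans] abs_mult)
  then have "\<bar>(1 - t) *\<^sub>R x + t *\<^sub>R y\<bar> powr s \<le> ((1 - t) * \<bar>x\<bar> + t * \<bar>y\<bar>) powr s"
    using s by (intro powr_mono2) auto
  also have "\<dots> \<le> (1 - t) * \<bar>x\<bar> powr s + t * \<bar>y\<bar> powr s" by (rule pos) auto
  finally show "\<bar>(1 - t) *\<^sub>R x + t *\<^sub>R y\<bar> powr s \<le> (1 - t) * \<bar>x\<bar> powr s + t * \<bar>y\<bar> powr s" .
qed auto

lemma power_diff_bound:
  fixes a b :: real assumes "a \<ge> 0" "b \<ge> 0"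
  shows "\<bar>a ^ Suc n - b ^ Suc n\<bar> \<le> real (Suc n) * \<bar>a - b\<bar> * max a b ^ n"
proof (induction n)
  case 0 then show ?case by simp
next
  case (Suc n)
  let ?m = "max a b"
  have "a ^ Suc (Suc n) - b ^ Suc (Suc n) = a * (a ^ Suc n - b ^ Suc n) + (a - b) * b ^ Suc n"
    by (simp add: algebra_simps)
  then have "\<bar>a ^ Suc (Suc n) - b ^ Suc (Suc n)\<bar> \<le> a * \<bar>a ^ Suc n - b ^ Suc n\<bar> + \<bar>a - b\<bar> * b ^ Suc n"
    using assms by (simp add: abs_mult abs_triangle_ineq[THEN order.trans])
  also have "\<dots> \<le> ?m * (real (Suc n) * \<bar>a - b\<bar> * ?m ^ n) + \<bar>a - b\<bar> * ?m ^ Suc n"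
    using assms Suc by (intro add_mono mult_mono mult_left_mono power_mono) auto
  also have "\<dots> = real (Suc (Suc n)) * \<bar>a - b\<bar> * ?m ^ Suc n" by (simp add: algebra_simps)
  finally show ?case .
qed

lemma power_diff_sq_bound:
  fixes a b :: real assumes "a \<ge> 0" "b \<ge> 0" "r \<ge> 1"
  shows "(a ^ r - b ^ r)\<^sup>2 \<le> real r * \<bar>a - b\<bar> * max a b ^ (2 * r - 1)"
proof -
  obtain n where r: "r = Suc n" using assms by (cases r) auto
  let ?m = "max a b"
  have m0: "?m \<ge> 0" using assms by simp
  have 1: "\<bar>a ^ r - b ^ r\<bar> \<le> real r * \<bar>a - b\<bar> * ?m ^ n" using power_diff_bound[OF assms(1,2)] r by simp
  have ar: "a ^ r \<le> ?m ^ r" "b ^ r \<le> ?m ^ r" using assms by (auto intro!: power_mono)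
  have 2: "\<bar>a ^ r - b ^ r\<bar> \<le> ?m ^ r"
    unfolding abs_le_iff using ar zero_le_power[OF assms(1), of r] zero_le_power[OF assms(2), of r] by linarith
  have "(a ^ r - b ^ r)\<^sup>2 = \<bar>a ^ r - b ^ r\<bar> * \<bar>a ^ r - b ^ r\<bar>" by (simp add: power2_eq_square)
  also have "\<dots> \<le> (real r * \<bar>a - b\<bar> * ?m ^ n) * ?m ^ r"
    using 1 2 m0 by (intro mult_mono) auto
  also have "\<dots> = real r * \<bar>a - b\<bar> * ?m ^ (2 * r - 1)" using r by (simp add: power_add[symmetric] mult_2)
  finally show ?thesis .
qed

lemma holder_nn:
  fixes a b :: "'a \<Rightarrow> real" and p q \<alpha> \<beta> :: real
  assumes am[measurable]: "a \<in> borel_measurable M" and bm[measurable]: "b \<in> borel_measurable M"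
    and nna: "\<And>x. a x \<ge> 0" and nnb: "\<And>x. b x \<ge> 0"
    and pq: "1 < p" "1 < q" "1/p + 1/q = 1"
    and A: "(\<integral>\<^sup>+x. ennreal (a x powr q) \<partial>M) \<le> ennreal \<alpha>"
    and B: "(\<integral>\<^sup>+x. ennreal (b x powr p) \<partial>M) \<le> ennreal \<beta>"
    and al: "\<alpha> \<ge> 0" and be: "\<beta> \<ge> 0"
  shows "(\<integral>\<^sup>+x. ennreal (a x * b x) \<partial>M) \<le> ennreal (\<alpha> powr (1/q) * \<beta> powr (1/p))"
proof (cases "\<alpha> = 0 \<or> \<beta> = 0")
  case True
  then show ?thesis
  proof
    assume "\<alpha> = 0"
    then have "(\<integral>\<^sup>+x. ennreal (a x powr q) \<partial>M) = 0" using A by simp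
    then have "AE x in M. ennreal (a x powr q) = 0" by (subst (asm) nn_integral_0_iff_AE) auto
    then have "AE x in M. ennreal (a x * b x) = 0"
      by eventually_elim (use nna in auto)
    then have "(\<integral>\<^sup>+x. ennreal (a x * b x) \<partial>M) = 0" by (subst nn_integral_0_iff_AE) auto
    then show ?thesis by simp
  next
    assume "\<beta> = 0"
    then have "(\<integral>\<^sup>+x. ennreal (b x powr p) \<partial>M) = 0" using B by simp
    then have "AE x in M. ennreal (b x powr p) = 0" by (subst (asm) nn_integral_0_iff_AE) auto
    then have "AE x in M. ennreal (a x * b x) = 0"
      by eventually_elim (use nnb in auto)
    then have "(\<integral>\<^sup>+x. ennreal (a x * b x) \<partial>M) = 0" by (subst nn_integral_0_iff_AE) auto
    then show ?thesis by simp
  qed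
next
  case False
  then have al': "\<alpha> > 0" and be': "\<beta> > 0" using al be by auto
  define c where "c = \<alpha> powr (1/q) * \<beta> powr (1/p)"
  have c0: "c > 0" using al' be' by (simp add: c_def)
  have pw: "a x * b x \<le> c * ((1/(q*\<alpha>)) * a x powr q + (1/(p*\<beta>)) * b x powr p)" for x
  proof -
    define a' where "a' = a x / \<alpha> powr (1/q)"
    define b' where "b' = b x / \<beta> powr (1/p)"
    have "a' * b' \<le> b' powr p / p + a' powr q / q"
      using Youngs_inequality[of p q b' a'] pq nna nnb al' be' by (simp add: a'_def b'_def mult.commute)
    moreover have "a' powr q = a x powr q / \<alpha>"
      using pq al' nna[of x] by (simp add: a'_def powr_divide powr_powr)
    moreover have "b' powr p = b x powr p / \<beta>"
      using pq be' nnb[of x] by (simp add: b'_def powr_divide powr_powr)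
    moreover have "a x * b x = c * (a' * b')"
      using al' be' by (simp add: a'_def b'_def c_def)
    ultimately have "a x * b x \<le> c * (a x powr q / \<alpha> / q + b x powr p / \<beta> / p)"
      using c0 by (metis add.commute less_le mult_left_mono)
    then show ?thesis by (simp add: field_simps)
  qed
  have "(\<integral>\<^sup>+x. ennreal (a x * b x) \<partial>M)
      \<le> (\<integral>\<^sup>+x. ennreal c * (ennreal (1/(q*\<alpha>)) * ennreal (a x powr q) + ennreal (1/(p*\<beta>)) * ennreal (b x powr p)) \<partial>M)"
  proof (rule nn_integral_mono)
    fix x
    have "ennreal (a x * b x) \<le> ennreal (c * ((1/(q*\<alpha>)) * a x powr q + (1/(p*\<beta>)) * b x powr p))"
      using pw by (rule ennreal_leI)
    also have "\<dots> = ennreal c * (ennreal (1/(q*\<alpha>)) * ennreal (a x powr q) + ennreal (1/(p*\<beta>)) * ennreal (b x powr p))"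
    proof -
      have x1: "0 \<le> (1/(q*\<alpha>)) * a x powr q" "0 \<le> (1/(p*\<beta>)) * b x powr p"
        using al' be' pq by auto
      have "ennreal (c * ((1/(q*\<alpha>)) * a x powr q + (1/(p*\<beta>)) * b x powr p))
          = ennreal c * ennreal ((1/(q*\<alpha>)) * a x powr q + (1/(p*\<beta>)) * b x powr p)"
        using c0 x1 by (intro ennreal_mult) auto
      also have "\<dots> = ennreal c * (ennreal ((1/(q*\<alpha>)) * a x powr q) + ennreal ((1/(p*\<beta>)) * b x powr p))"
        using x1 by (simp only: ennreal_plus)
      also have "\<dots> = ennreal c * (ennreal (1/(q*\<alpha>)) * ennreal (a x powr q) + ennreal (1/(p*\<beta>)) * ennreal (b x powr p))"
        using al' be' pq by (simp only: ennreal_mult[symmetric] less_imp_le divide_nonneg_nonneg mult_nonneg_nonneg powr_ge_zero zero_le_one)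
      finally show ?thesis .
    qed
    finally show "ennreal (a x * b x) \<le> ennreal c * (ennreal (1/(q*\<alpha>)) * ennreal (a x powr q) + ennreal (1/(p*\<beta>)) * ennreal (b x powr p))" .
  qed
  also have "\<dots> = ennreal c * (ennreal (1/(q*\<alpha>)) * (\<integral>\<^sup>+x. ennreal (a x powr q) \<partial>M) + ennreal (1/(p*\<beta>)) * (\<integral>\<^sup>+x. ennreal (b x powr p) \<partial>M))"
  proof -
    let ?f = "\<lambda>x. ennreal (1/(q*\<alpha>)) * ennreal (a x powr q)"
    let ?g = "\<lambda>x. ennreal (1/(p*\<beta>)) * ennreal (b x powr p)"
    have m1: "?f \<in> borel_measurable M" "?g \<in> borel_measurable M" by measurable
    have "(\<integral>\<^sup>+x. ennreal c * (?f x + ?g x) \<partial>M) = ennreal c * (\<integral>\<^sup>+x. ?f x + ?g x \<partial>M)"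
      using m1 by (intro nn_integral_cmult) auto
    also have "(\<integral>\<^sup>+x. ?f x + ?g x \<partial>M) = (\<integral>\<^sup>+x. ?f x \<partial>M) + (\<integral>\<^sup>+x. ?g x \<partial>M)"
      using m1 by (intro nn_integral_add) auto
    also have "(\<integral>\<^sup>+x. ?f x \<partial>M) = ennreal (1/(q*\<alpha>)) * (\<integral>\<^sup>+x. ennreal (a x powr q) \<partial>M)"
      by (intro nn_integral_cmult) measurable
    also have "(\<integral>\<^sup>+x. ?g x \<partial>M) = ennreal (1/(p*\<beta>)) * (\<integral>\<^sup>+x. ennreal (b x powr p) \<partial>M)"
      by (intro nn_integral_cmult) measurable
    finally show ?thesis .
  qed
  also have "\<dots> \<le> ennreal c * (ennreal (1/(q*\<alpha>)) * ennreal \<alpha> + ennreal (1/(p*\<beta>)) * ennreal \<beta>)"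
    using A B by (intro mult_left_mono add_mono) auto
  also have "\<dots> = ennreal c * ennreal (1/q + 1/p)"
  proof -
    have "ennreal (1/(q*\<alpha>)) * ennreal \<alpha> = ennreal (1/q)"
      using al' pq by (subst ennreal_mult[symmetric]) auto
    moreover have "ennreal (1/(p*\<beta>)) * ennreal \<beta> = ennreal (1/p)"
      using be' pq by (subst ennreal_mult[symmetric]) auto
    moreover have "ennreal (1/q) + ennreal (1/p) = ennreal (1/q + 1/p)"
      using pq by (subst ennreal_plus) auto
    ultimately show ?thesis by (simp only:)
  qed
  also have "\<dots> = ennreal c"
  proof -
    have "1/q + 1/p = 1" using pq by simp
    then show ?thesis by (simp only: ennreal_1 mult_1_right)
  qed
  finally show ?thesis by (simp add: c_def)
qed

lemma pow_le_one_plus_powr: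
  fixes x s :: real assumes "real r \<le> s"
  shows "\<bar>x\<bar> ^ r \<le> 1 + \<bar>x\<bar> powr s"
proof (cases "\<bar>x\<bar> \<le> 1")
  case True
  then have "\<bar>x\<bar> ^ r \<le> 1" by (simp add: power_le_one)
  then show ?thesis by (smt (verit) powr_ge_zero)
next
  case False
  then have "\<bar>x\<bar> ^ r = \<bar>x\<bar> powr real r" by (simp add: powr_realpow)
  also have "\<dots> \<le> \<bar>x\<bar> powr s" using False assms by (intro powr_mono) auto
  finally show ?thesis by simp
qed

lemma key_bound:
  fixes M F :: "'a measure" and X0 :: "'a \<Rightarrow> real" and p q s m :: real and r :: nat
  assumes P: "prob_space M" and sub: "subalgebra M F"
    and X0m[measurable]: "X0 \<in> borel_measurable M" and X0i: "integrable M X0"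
    and r: "r \<ge> 1" and pq: "1 < p" "1 < q" "1/p + 1/q = 1"
    and sdef: "s = p * (2 * real r - 1)"
    and Si: "integrable M (\<lambda>\<omega>. \<bar>X0 \<omega>\<bar> powr s)"
    and Lq: "Lq_norm M q (\<lambda>\<omega>. X0 \<omega> - real_cond_exp M F X0 \<omega>) \<le> ennreal m" and m0: "m \<ge> 0"
  shows "Lq_norm M 2 (\<lambda>\<omega>. \<bar>X0 \<omega>\<bar> ^ r - real_cond_exp M F (\<lambda>\<omega>. \<bar>X0 \<omega>\<bar> ^ r) \<omega>)
           \<le> ennreal (sqrt (4 * real r * (2 * (\<integral>\<omega>. \<bar>X0 \<omega>\<bar> powr s \<partial>M)) powr (1/p) * m))"
proof -
  interpret prob_space M by (rule P)
  interpret finite_measure_subalgebra M F by unfold_locales (rule sub)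
  define S where "S = (\<integral>\<omega>. \<bar>X0 \<omega>\<bar> powr s \<partial>M)"
  define Y where "Y = real_cond_exp M F X0"
  have Ym[measurable]: "Y \<in> borel_measurable M" unfolding Y_def by simp
  have YF[measurable]: "Y \<in> borel_measurable F" unfolding Y_def by simp
  have r1: "2 * real r - 1 \<ge> 1" using r by simp
  have s1: "s \<ge> 1" using mult_mono[OF less_imp_le[OF pq(1)] r1] pq(1) by (simp add: sdef)
  have rs: "real r \<le> s"
  proof -
    have "real r \<le> 1 * (2 * real r - 1)" using r by simp
    also have "\<dots> \<le> p * (2 * real r - 1)" using pq r1 by (intro mult_right_mono) auto
    finally show ?thesis by (simp add: sdef)
  qed
  have S0: "S \<ge> 0" unfolding S_def by (intro integral_nonneg_AE) auto
  have J: "AE x in M. \<bar>Y x\<bar> powr s \<le> real_cond_exp M F (\<lambda>x. \<bar>X0 x\<bar> powr s) x"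
    unfolding Y_def
    by (rule real_cond_exp_jensens_inequality(2)[of X0 UNIV 0 0 "\<lambda>x. \<bar>x\<bar> powr s"])
       (use X0i Si convex_abs_powr[OF s1] in auto)
  have Ysi: "integrable M (\<lambda>x. \<bar>Y x\<bar> powr s)"
    by (rule Bochner_Integration.integrable_bound[OF real_cond_exp_int(1)[OF Si]]) (measurable, use J in \<open>eventually_elim, auto\<close>)
  have SY: "(\<integral>x. \<bar>Y x\<bar> powr s \<partial>M) \<le> S"
  proof -
    have "(\<integral>x. \<bar>Y x\<bar> powr s \<partial>M) \<le> (\<integral>x. real_cond_exp M F (\<lambda>x. \<bar>X0 x\<bar> powr s) x \<partial>M)"
      by (rule integral_mono_AE[OF Ysi real_cond_exp_int(1)[OF Si] J])
    also have "\<dots> = S" unfolding S_def by (rule real_cond_exp_int(2)[OF Si])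
    finally show ?thesis .
  qed
  have one_i: "integrable M (\<lambda>x. 1 + \<bar>X0 x\<bar> powr s)" using Si by simp
  have one_iY: "integrable M (\<lambda>x. 1 + \<bar>Y x\<bar> powr s)" using Ysi by simp
  have fi: "integrable M (\<lambda>x. \<bar>X0 x\<bar> ^ r)"
    by (rule Bochner_Integration.integrable_bound[OF one_i])
       (measurable, use pow_le_one_plus_powr[OF rs] in \<open>auto intro!: AE_I2 simp: abs_le_iff\<close>)
  have gi: "integrable M (\<lambda>x. \<bar>Y x\<bar> ^ r)"
    by (rule Bochner_Integration.integrable_bound[OF one_iY])
       (measurable, use pow_le_one_plus_powr[OF rs] in \<open>auto intro!: AE_I2 simp: abs_le_iff\<close>)
  have LqI: "(\<integral>\<^sup>+x. ennreal (\<bar>X0 x - Y x\<bar> powr q) \<partial>M) \<le> ennreal (m powr q)"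
  proof -
    define I where "I = (\<integral>\<^sup>+x. ennreal (\<bar>X0 x - Y x\<bar> powr q) \<partial>M)"
    have "Lq_norm M q (\<lambda>\<omega>. X0 \<omega> - Y \<omega>) = (if I = \<infinity> then \<infinity> else ennreal (enn2real I powr (1 / q)))"
      unfolding Lq_norm_def I_def Let_def by simp
    with Lq have Iinf: "I \<noteq> \<infinity>" and Ile: "ennreal (enn2real I powr (1 / q)) \<le> ennreal m"
      unfolding Y_def by (auto simp: top_unique split: if_splits)
    have "enn2real I powr (1 / q) \<le> m" using Ile m0 by (simp add: ennreal_le_iff)
    then have "(enn2real I powr (1 / q)) powr q \<le> m powr q" using pq by (intro powr_mono2) auto
    then have "enn2real I \<le> m powr q" using pq by (simp add: powr_powr)
    then have "ennreal (enn2real I) \<le> ennreal (m powr q)" by (rule ennreal_leI)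
    then show ?thesis using Iinf unfolding I_def by (simp add: ennreal_enn2real_if split: if_splits)
  qed
  define W where "W x = max \<bar>X0 x\<bar> \<bar>Y x\<bar> powr (2 * real r - 1)" for x
  have Wm[measurable]: "W \<in> borel_measurable M" unfolding W_def by measurable
  have Wp: "W x powr p \<le> \<bar>X0 x\<bar> powr s + \<bar>Y x\<bar> powr s" for x
  proof -
    have "W x powr p = max \<bar>X0 x\<bar> \<bar>Y x\<bar> powr s"
      unfolding W_def sdef by (simp add: powr_powr mult.commute)
    also have "\<dots> \<le> \<bar>X0 x\<bar> powr s + \<bar>Y x\<bar> powr s"
      by (cases "\<bar>X0 x\<bar> \<le> \<bar>Y x\<bar>") (auto simp: max_def)
    finally show ?thesis .
  qed
  have WI: "(\<integral>\<^sup>+x. ennreal (W x powr p) \<partial>M) \<le> ennreal (2 * S)"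
  proof -
    have "(\<integral>\<^sup>+x. ennreal (W x powr p) \<partial>M) \<le> (\<integral>\<^sup>+x. ennreal (\<bar>X0 x\<bar> powr s + \<bar>Y x\<bar> powr s) \<partial>M)"
      by (intro nn_integral_mono ennreal_leI Wp)
    also have "\<dots> = ennreal (\<integral>x. \<bar>X0 x\<bar> powr s + \<bar>Y x\<bar> powr s \<partial>M)"
      by (intro nn_integral_eq_integral) (use Si Ysi in auto)
    also have "(\<integral>x. \<bar>X0 x\<bar> powr s + \<bar>Y x\<bar> powr s \<partial>M) = S + (\<integral>x. \<bar>Y x\<bar> powr s \<partial>M)"
      unfolding S_def using Si Ysi by simp
    also have "ennreal (S + (\<integral>x. \<bar>Y x\<bar> powr s \<partial>M)) \<le> ennreal (2 * S)"
      using SY by (intro ennreal_leI) simp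
    finally show ?thesis .
  qed
  have H: "(\<integral>\<^sup>+x. ennreal (\<bar>X0 x - Y x\<bar> * W x) \<partial>M) \<le> ennreal (m * (2 * S) powr (1/p))"
  proof -
    have "(\<integral>\<^sup>+x. ennreal (\<bar>X0 x - Y x\<bar> * W x) \<partial>M) \<le> ennreal ((m powr q) powr (1/q) * (2 * S) powr (1/p))"
      by (rule holder_nn[OF _ Wm _ _ pq LqI WI]) (use S0 in \<open>auto simp: W_def\<close>)
    also have "(m powr q) powr (1/q) = m" using pq m0 by (simp add: powr_powr)
    finally show ?thesis .
  qed
  define h where "h x = \<bar>X0 x\<bar> ^ r - \<bar>Y x\<bar> ^ r" for x
  have hm[measurable]: "h \<in> borel_measurable M" unfolding h_def by measurable
  have hpw: "(h x)\<^sup>2 \<le> real r * (\<bar>X0 x - Y x\<bar> * W x)" for x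
  proof -
    let ?m = "max \<bar>X0 x\<bar> \<bar>Y x\<bar>"
    have "(h x)\<^sup>2 \<le> real r * \<bar>\<bar>X0 x\<bar> - \<bar>Y x\<bar>\<bar> * ?m ^ (2 * r - 1)"
      unfolding h_def by (rule power_diff_sq_bound) (use r in auto)
    also have "\<dots> \<le> real r * \<bar>X0 x - Y x\<bar> * ?m ^ (2 * r - 1)"
      by (intro mult_right_mono mult_left_mono abs_triangle_ineq3) auto
    also have "?m ^ (2 * r - 1) = W x"
    proof (cases "?m = 0")
      case True
      then have "X0 x = 0" "Y x = 0" by (auto simp: max_def split: if_splits)
      moreover have "2 * r - 1 \<noteq> 0" using r by simp
      ultimately show ?thesis by (simp add: W_def)
    next
      case False
      then have "?m > 0" by (simp add: less_le)
      then have "?m powr real (2 * r - 1) = ?m ^ (2 * r - 1)" by (rule powr_realpow)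
      moreover have "real (2 * r - 1) = 2 * real r - 1" using r by (simp add: of_nat_diff)
      ultimately show ?thesis by (simp add: W_def)
    qed
    finally show ?thesis by (simp add: mult.assoc)
  qed
  define B where "B = real r * (m * (2 * S) powr (1/p))"
  have B0: "B \<ge> 0" unfolding B_def using m0 by simp
  have h2I: "(\<integral>\<^sup>+x. ennreal ((h x)\<^sup>2) \<partial>M) \<le> ennreal B"
  proof -
    have "(\<integral>\<^sup>+x. ennreal ((h x)\<^sup>2) \<partial>M) \<le> (\<integral>\<^sup>+x. ennreal (real r) * ennreal (\<bar>X0 x - Y x\<bar> * W x) \<partial>M)"
    proof (intro nn_integral_mono)
      fix x
      have "ennreal (real r) * ennreal (\<bar>X0 x - Y x\<bar> * W x) = ennreal (real r * (\<bar>X0 x - Y x\<bar> * W x))"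
        by (subst ennreal_mult) (auto simp: W_def)
      then show "ennreal ((h x)\<^sup>2) \<le> ennreal (real r) * ennreal (\<bar>X0 x - Y x\<bar> * W x)"
        using hpw[of x] by (simp add: ennreal_leI)
    qed
    also have "\<dots> = ennreal (real r) * (\<integral>\<^sup>+x. ennreal (\<bar>X0 x - Y x\<bar> * W x) \<partial>M)"
      by (intro nn_integral_cmult) measurable
    also have "\<dots> \<le> ennreal (real r) * ennreal (m * (2 * S) powr (1/p))"
      by (intro mult_left_mono H) auto
    also have "\<dots> = ennreal B" unfolding B_def using m0 by (simp add: ennreal_mult)
    finally show ?thesis .
  qed
  have h2i: "integrable M (\<lambda>x. (h x)\<^sup>2)"
    by (rule integrableI_bounded) (use h2I in \<open>auto simp: top_unique order_le_less_trans[OF _ ennreal_less_top]\<close>)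
  have h2B: "(\<integral>x. (h x)\<^sup>2 \<partial>M) \<le> B"
  proof -
    have "ennreal (\<integral>x. (h x)\<^sup>2 \<partial>M) = (\<integral>\<^sup>+x. ennreal ((h x)\<^sup>2) \<partial>M)"
      by (rule nn_integral_eq_integral[symmetric]) (use h2i in auto)
    with h2I have "ennreal (\<integral>x. (h x)\<^sup>2 \<partial>M) \<le> ennreal B" by simp
    then show ?thesis by (rule ennreal_le_iff[OF B0, THEN iffD1])
  qed
  have hi: "integrable M h" unfolding h_def using fi gi by simp
  define Ch where "Ch = real_cond_exp M F h"
  have Chm[measurable]: "Ch \<in> borel_measurable M" unfolding Ch_def by simp
  have J2: "AE x in M. (Ch x)\<^sup>2 \<le> real_cond_exp M F (\<lambda>x. (h x)\<^sup>2) x"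
    unfolding Ch_def
    by (rule real_cond_exp_jensens_inequality(2)[of h UNIV 0 0 power2])
       (use hi h2i convex_power2 in auto)
  have Ch2i: "integrable M (\<lambda>x. (Ch x)\<^sup>2)"
    by (rule Bochner_Integration.integrable_bound[OF real_cond_exp_int(1)[OF h2i]]) (measurable, use J2 in \<open>eventually_elim, auto\<close>)
  have Ch2: "(\<integral>x. (Ch x)\<^sup>2 \<partial>M) \<le> (\<integral>x. (h x)\<^sup>2 \<partial>M)"
  proof -
    have "(\<integral>x. (Ch x)\<^sup>2 \<partial>M) \<le> (\<integral>x. real_cond_exp M F (\<lambda>x. (h x)\<^sup>2) x \<partial>M)"
      by (rule integral_mono_AE[OF Ch2i real_cond_exp_int(1)[OF h2i] J2])
    also have "\<dots> = (\<integral>x. (h x)\<^sup>2 \<partial>M)" by (rule real_cond_exp_int(2)[OF h2i])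
    finally show ?thesis .
  qed
  define G where "G = real_cond_exp M F (\<lambda>\<omega>. \<bar>X0 \<omega>\<bar> ^ r)"
  have gF: "(\<lambda>x. \<bar>Y x\<bar> ^ r) \<in> borel_measurable F" by measurable
  have AE1: "AE x in M. Ch x = G x - real_cond_exp M F (\<lambda>x. \<bar>Y x\<bar> ^ r) x"
    unfolding Ch_def G_def h_def by (rule real_cond_exp_diff[OF fi gi])
  have AE2: "AE x in M. real_cond_exp M F (\<lambda>x. \<bar>Y x\<bar> ^ r) x = \<bar>Y x\<bar> ^ r"
    by (rule real_cond_exp_F_meas[OF gi gF])
  define D where "D x = \<bar>X0 x\<bar> ^ r - G x" for x
  have Dm[measurable]: "D \<in> borel_measurable M" unfolding D_def G_def by measurable
  have AE3: "AE x in M. (D x)\<^sup>2 \<le> 2 * (h x)\<^sup>2 + 2 * (Ch x)\<^sup>2"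
    using AE1 AE2
  proof eventually_elim
    case (elim x)
    then have "D x = h x - Ch x" unfolding D_def h_def by simp
    then have "(D x)\<^sup>2 = (h x - Ch x)\<^sup>2" by simp
    moreover have "2 * (h x)\<^sup>2 + 2 * (Ch x)\<^sup>2 - (h x - Ch x)\<^sup>2 = (h x + Ch x)\<^sup>2"
      by (simp add: power2_eq_square algebra_simps)
    ultimately show ?case using zero_le_power2[of "h x + Ch x"] by linarith
  qed
  have DI: "(\<integral>\<^sup>+x. ennreal (\<bar>D x\<bar> powr 2) \<partial>M) \<le> ennreal (4 * B)"
  proof -
    have "(\<integral>\<^sup>+x. ennreal (\<bar>D x\<bar> powr 2) \<partial>M) \<le> (\<integral>\<^sup>+x. ennreal (2 * (h x)\<^sup>2 + 2 * (Ch x)\<^sup>2) \<partial>M)"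
      by (intro nn_integral_mono_AE) (use AE3 in \<open>eventually_elim, intro ennreal_leI, simp\<close>)
    also have "\<dots> = ennreal (\<integral>x. 2 * (h x)\<^sup>2 + 2 * (Ch x)\<^sup>2 \<partial>M)"
      by (intro nn_integral_eq_integral) (use h2i Ch2i in auto)
    also have "(\<integral>x. 2 * (h x)\<^sup>2 + 2 * (Ch x)\<^sup>2 \<partial>M) = 2 * (\<integral>x. (h x)\<^sup>2 \<partial>M) + 2 * (\<integral>x. (Ch x)\<^sup>2 \<partial>M)"
      using h2i Ch2i by simp
    also have "ennreal (2 * (\<integral>x. (h x)\<^sup>2 \<partial>M) + 2 * (\<integral>x. (Ch x)\<^sup>2 \<partial>M)) \<le> ennreal (4 * B)"
      using h2B Ch2 by (intro ennreal_leI) simp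
    finally show ?thesis .
  qed
  have "Lq_norm M 2 D \<le> ennreal (sqrt (4 * B))"
  proof -
    define I where "I = (\<integral>\<^sup>+x. ennreal (\<bar>D x\<bar> powr 2) \<partial>M)"
    have Iinf: "I \<noteq> \<infinity>" using DI unfolding I_def by (auto simp: top_unique)
    have "enn2real I \<le> 4 * B"
      using DI B0 unfolding I_def by (simp add: enn2real_leI)
    then have "enn2real I powr (1/2) \<le> sqrt (4 * B)" by (simp add: powr_half_sqrt)
    then show ?thesis
      unfolding Lq_norm_def Let_def I_def[symmetric] using Iinf by (simp add: ennreal_leI)
  qed
  moreover have "4 * B = 4 * real r * (2 * S) powr (1/p) * m" unfolding B_def by (simp add: mult_ac)
  ultimately show ?thesis unfolding D_def G_def S_def by simp
qed

lemma gen_sigma_subalgebra: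
  assumes Zm: "\<And>u. Z u \<in> measurable M N"
  shows "subalgebra M (gen_sigma M N Z a b)"
proof -
  let ?G = "(\<Union>u\<in>{a..b}. {Z u -` A \<inter> space M | A. A \<in> sets N})"
  have G: "?G \<subseteq> sets M" using Zm by (auto intro: measurable_sets)
  then have GP: "?G \<subseteq> Pow (space M)" using sets.sets_into_space by blast
  have "sets (gen_sigma M N Z a b) = sigma_sets (space M) ?G"
    unfolding gen_sigma_def using GP by (simp add: sets_measure_of)
  moreover have "sigma_sets (space M) ?G \<subseteq> sets M" using G by (rule sets.sigma_sets_subset)
  moreover have "space (gen_sigma M N Z a b) = space M"
    unfolding gen_sigma_def by (simp add: space_measure_of_conv)
  ultimately show ?thesis unfolding subalgebra_def by simp
qed

lemma stationary_map:
  fixes X :: "int \<Rightarrow> 'a \<Rightarrow> real" and \<phi> :: "real \<Rightarrow> real"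
  assumes st: "stationary_process M borel X" and phim: "\<phi> \<in> borel_measurable borel"
  shows "stationary_process M borel (\<lambda>n \<omega>. \<phi> (X n \<omega>))"
proof -
  let ?P = "PiM (UNIV::int set) (\<lambda>_. (borel :: real measure))"
  have Xm: "\<And>n. X n \<in> borel_measurable M" and eq: "distr M ?P (\<lambda>\<omega> n. X (n + 1) \<omega>) = distr M ?P (\<lambda>\<omega> n. X n \<omega>)"
    using st unfolding stationary_process_def by auto
  define T :: "(int \<Rightarrow> real) \<Rightarrow> int \<Rightarrow> real" where "T = (\<lambda>x n. \<phi> (x n))"
  have Tm: "T \<in> measurable ?P ?P" unfolding T_def
    by (rule measurable_PiM_single') (use phim in auto)
  have m1: "(\<lambda>\<omega> n. X (n + 1) \<omega>) \<in> measurable M ?P"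
    by (rule measurable_PiM_single') (use Xm in auto)
  have m2: "(\<lambda>\<omega> n. X n \<omega>) \<in> measurable M ?P"
    by (rule measurable_PiM_single') (use Xm in auto)
  have "distr M ?P (\<lambda>\<omega> n. \<phi> (X (n + 1) \<omega>)) = distr (distr M ?P (\<lambda>\<omega> n. X (n + 1) \<omega>)) ?P T"
    using distr_distr[OF Tm m1] by (simp add: T_def comp_def)
  also have "\<dots> = distr (distr M ?P (\<lambda>\<omega> n. X n \<omega>)) ?P T" by (simp only: eq)
  also have "\<dots> = distr M ?P (\<lambda>\<omega> n. \<phi> (X n \<omega>))"
    using distr_distr[OF Tm m2] by (simp add: T_def comp_def)
  finally show ?thesis unfolding stationary_process_def using Xm phim by auto
qed

theorem corollary7:
  fixes M :: "'a measure" and N :: "'b measure"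
    and Z :: "int \<Rightarrow> 'a \<Rightarrow> 'b" and X :: "int \<Rightarrow> 'a \<Rightarrow> real"
    and \<nu> \<mu> :: "nat \<Rightarrow> real" and r :: nat and p q :: real
  assumes "prob_space M"
    and "stationary_process M N Z"
    and "NED M 2 N Z X \<nu>"
    and "r \<ge> 1"
    and "1 < p" and "1 < q" and "1 / p + 1 / q = 1"
    and "\<forall>n. (\<integral>\<^sup>+ \<omega>. ennreal (\<bar>X n \<omega>\<bar> powr (p * (2 * real r - 1))) \<partial>M) < \<infinity>"
    and "NED M q N Z X \<mu>"
    and "\<mu> \<in> O(\<nu>)"
  shows "\<exists>c. NED M 2 N Z (\<lambda>n \<omega>. \<bar>X n \<omega>\<bar> ^ r) c \<and> c \<in> O(\<lambda>k. sqrt (\<nu> k))"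
proof -
  note P = assms(1) and r = assms(4) and pq = assms(5,6,7)
  interpret prob_space M by (rule P)
  define s where "s = p * (2 * real r - 1)"
  have Zm: "\<And>u. Z u \<in> measurable M N" using assms(2) unfolding stationary_process_def by auto
  have stX: "stationary_process M borel X" and X0i: "integrable M (X 0)"
    and Lq: "\<And>k. Lq_norm M q (\<lambda>\<omega>. X 0 \<omega> - real_cond_exp M (gen_sigma M N Z (- int k) (int k)) (X 0) \<omega>) \<le> ennreal (\<mu> k)"
    and mu0: "\<mu> \<longlonglongrightarrow> 0"
    using assms(9) unfolding NED_def by auto
  have X0m[measurable]: "X 0 \<in> borel_measurable M" using stX unfolding stationary_process_def by auto
  have Si: "integrable M (\<lambda>\<omega>. \<bar>X 0 \<omega>\<bar> powr s)"
    by (rule integrableI_bounded) (use assms(8) in \<open>auto simp: s_def\<close>)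
  define S where "S = (\<integral>\<omega>. \<bar>X 0 \<omega>\<bar> powr s \<partial>M)"
  define C0 where "C0 = 4 * real r * (2 * S) powr (1/p)"
  have C00: "C0 \<ge> 0" unfolding C0_def by simp
  define c where "c k = sqrt (C0 * max 0 (\<mu> k))" for k
  have r1: "2 * real r - 1 \<ge> 1" using r by simp
  have rs: "real r \<le> s"
  proof -
    have "real r \<le> 1 * (2 * real r - 1)" using r by simp
    also have "\<dots> \<le> p * (2 * real r - 1)" using pq r1 by (intro mult_right_mono) auto
    finally show ?thesis by (simp add: s_def)
  qed
  have fi: "integrable M (\<lambda>x. \<bar>X 0 x\<bar> ^ r)"
    by (rule Bochner_Integration.integrable_bound[of _ "\<lambda>x. 1 + \<bar>X 0 x\<bar> powr s"])
       (use Si in simp, measurable, use pow_le_one_plus_powr[OF rs] in \<open>auto intro!: AE_I2 simp: abs_le_iff\<close>)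
  have NEDr: "NED M 2 N Z (\<lambda>n \<omega>. \<bar>X n \<omega>\<bar> ^ r) c"
    unfolding NED_def
  proof (intro conjI allI)
    show "stationary_process M borel (\<lambda>n \<omega>. \<bar>X n \<omega>\<bar> ^ r)"
      by (rule stationary_map[OF stX]) measurable
    show "integrable M (\<lambda>\<omega>. \<bar>X 0 \<omega>\<bar> ^ r)" by (rule fi)
    fix k :: nat
    have "Lq_norm M q (\<lambda>\<omega>. X 0 \<omega> - real_cond_exp M (gen_sigma M N Z (- int k) (int k)) (X 0) \<omega>) \<le> ennreal (max 0 (\<mu> k))"
      using Lq[of k] by (rule order.trans) (intro ennreal_leI, simp)
    from key_bound[OF P gen_sigma_subalgebra[OF Zm] X0m X0i r pq s_def Si this]
    show "Lq_norm M 2 (\<lambda>\<omega>. \<bar>X 0 \<omega>\<bar> ^ r - real_cond_exp M (gen_sigma M N Z (- int k) (int k)) (\<lambda>\<omega>. \<bar>X 0 \<omega>\<bar> ^ r) \<omega>) \<le> ennreal (c k)"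
      by (simp add: c_def C0_def S_def mult.assoc)
  next
    have "(\<lambda>k. sqrt (C0 * max 0 (\<mu> k))) \<longlonglongrightarrow> sqrt (C0 * max 0 0)"
      by (intro tendsto_intros mu0)
    then show "c \<longlonglongrightarrow> 0" by (simp add: c_def[abs_def])
  qed
  obtain K where K: "K > 0" "eventually (\<lambda>k. norm (\<mu> k) \<le> K * norm (\<nu> k)) at_top"
    using assms(10) by (elim landau_o.bigE)
  have "c \<in> O(\<lambda>k. sqrt (\<nu> k))"
  proof (rule bigoI)
    show "eventually (\<lambda>k. norm (c k) \<le> sqrt (C0 * K) * norm (sqrt (\<nu> k))) at_top"
      using K(2)
    proof eventually_elim
      case (elim k)
      have "norm (c k) = sqrt (C0 * max 0 (\<mu> k))" unfolding c_def using C00 by simp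
      also have "\<dots> \<le> sqrt (C0 * (K * \<bar>\<nu> k\<bar>))"
        using elim C00 by (intro real_sqrt_le_mono mult_left_mono) auto
      also have "\<dots> = sqrt (C0 * K) * norm (sqrt (\<nu> k))"
      proof -
        have "sqrt \<bar>\<nu> k\<bar> = \<bar>sqrt (\<nu> k)\<bar>"
          by (cases "\<nu> k \<ge> 0") (auto simp: real_sqrt_minus)
        then show ?thesis by (simp add: real_sqrt_mult mult.assoc)
      qed
      finally show ?case .
    qed
  qed
  with NEDr show ?thesis by blast
qed

end
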